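(* Let $X_1,\dots,X_n$ be i.i.d. with distribution function $F$, fix $z>0$ with $p=F(z)>0$, and let $Q(u)=\inf\{x: F(x)\ge u\}$. Suppose $Q$ is continuous on $[0,p]$ and $\int_0^p |Q(u)|\,du<\infty$. Then the estimator $\widehat S=\frac{2}{z}\frac{U_1}{U_2}$ is an asymptotically unbiased estimator of the Sen index $S$, i.e. $E(\widehat S)\to S$ as $n\to\infty$.
   Context: $F$ is the distribution function of a nonnegative random variable (income), and $X_1,X_2$ denote independent draws from $F$. The Sen index is $S=\frac{2}{zF(z)}\int_0^z (z-x)\,(F(z)-F(x))\,dF(x)=\frac{2}{z}\frac{\Delta_1}{\Delta_2}$ with $\Delta_1=E\big[(z-X_1)I(X_1<X_2\le z)\big]$ and $\Delta_2=F(z)$. Define $\psi_1(x_1,x_2)=\tfrac12\big[(z-x_1)I(x_1<x_2\le z)+(z-x_2)I(x_2<x_1\le z)\big]$, $\psi_2(x_1,x_2)=\tfrac12\big[I(x_1\le z)+I(x_2\le z)\big]$, $U_1=\binom n2^{-1}\sum_{1\le j<i\le n}\psi_1(X_i,X_j)$, $U_2=\binom n2^{-1}\sum_{1\le j<i\le n}\psi_2(X_i,X_j)$. *)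

theory Defs
  imports "HOL-Probability.Probability"
begin

definition quantile :: "(real \<Rightarrow> real) \<Rightarrow> real \<Rightarrow> real" where
  "quantile F u = Inf {x. F x \<ge> u}"

definition psi1 :: "real \<Rightarrow> real \<Rightarrow> real \<Rightarrow> real" where
  "psi1 z x1 x2 = (1/2) * ((z - x1) * (if x1 < x2 \<and> x2 \<le> z then 1 else 0)
                         + (z - x2) * (if x2 < x1 \<and> x1 \<le> z then 1 else 0))"

definition psi2 :: "real \<Rightarrow> real \<Rightarrow> real \<Rightarrow> real" where
  "psi2 z x1 x2 = (1/2) * ((if x1 \<le> z then 1 else 0) + (if x2 \<le> z then 1 else 0))"

definition U1 :: "real \<Rightarrow> (nat \<Rightarrow> 'a \<Rightarrow> real) \<Rightarrow> nat \<Rightarrow> 'a \<Rightarrow> real" where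
  "U1 z X n \<omega> = inverse (real (n choose 2)) *
     (\<Sum>i<n. \<Sum>j<i. psi1 z (X i \<omega>) (X j \<omega>))"

definition U2 :: "real \<Rightarrow> (nat \<Rightarrow> 'a \<Rightarrow> real) \<Rightarrow> nat \<Rightarrow> 'a \<Rightarrow> real" where
  "U2 z X n \<omega> = inverse (real (n choose 2)) *
     (\<Sum>i<n. \<Sum>j<i. psi2 z (X i \<omega>) (X j \<omega>))"

text \<open>The estimator S_hat = (2/z) U1/U2 (with Isabelle's convention x/0 = 0).\<close>
definition S_hat :: "real \<Rightarrow> (nat \<Rightarrow> 'a \<Rightarrow> real) \<Rightarrow> nat \<Rightarrow> 'a \<Rightarrow> real" where
  "S_hat z X n \<omega> = (2 / z) * (U1 z X n \<omega> / U2 z X n \<omega>)"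

text \<open>Sen index S = 2/(z F(z)) * int_0^z (z - x)(F(z) - F(x)) dF(x),
  where dF is the distribution (law) mu of the income variable.\<close>
definition sen_index :: "real \<Rightarrow> (real \<Rightarrow> real) \<Rightarrow> real measure \<Rightarrow> real" where
  "sen_index z F \<mu> = (2 / (z * F z)) *
     (LINT x : {0..z} | \<mu>. (z - x) * (F z - F x))"

end

theory Submission imports Defs "HOL-Real_Asymp.Real_Asymp" begin

definition ind :: "real \<Rightarrow> real \<Rightarrow> real" where
  "ind z x = (if x \<le> z then 1 else 0)"

definition g1 :: "real \<Rightarrow> real \<Rightarrow> real \<Rightarrow> real" where
  "g1 z x y = (z - x) * (if 0 \<le> x \<and> x < y \<and> y \<le> z then 1 else 0)"

definition g2 :: "real \<Rightarrow> real \<Rightarrow> real \<Rightarrow> real" where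
  "g2 z x y = ind z x * ind z y"

lemma pairsum0:
  fixes f :: "nat \<Rightarrow> nat \<Rightarrow> real"
  shows "(\<Sum>i<n. \<Sum>j<i. f i j + f j i) = (\<Sum>i<n. \<Sum>j<n. f i j) - (\<Sum>i<n. f i i)"
proof (induction n)
  case 0 then show ?case by simp
next
  case (Suc n)
  have "(\<Sum>i<Suc n. \<Sum>j<Suc n. f i j) = (\<Sum>i<n. \<Sum>j<n. f i j) + (\<Sum>i<n. f i n) + (\<Sum>j<n. f n j) + f n n"
    by (simp add: sum.distrib)
  then show ?case using Suc by (simp add: sum.distrib)
qed

lemma pairsum:
  fixes f :: "nat \<Rightarrow> nat \<Rightarrow> real"
  shows "(\<Sum>i<n. \<Sum>j<i. f i j + f j i) = (\<Sum>i<n. \<Sum>j\<in>{..<n}-{i}. f i j)"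
proof -
  have "(\<Sum>i<n. \<Sum>j\<in>{..<n}-{i}. f i j) = (\<Sum>i<n. (\<Sum>j<n. f i j) - f i i)"
    by (intro sum.cong refl) (simp add: sum_diff1)
  also have "\<dots> = (\<Sum>i<n. \<Sum>j<n. f i j) - (\<Sum>i<n. f i i)"
    by (simp add: sum_subtractf)
  finally show ?thesis by (simp add: pairsum0)
qed

locale sen = prob_space M for M :: "'a measure" +
  fixes X :: "nat \<Rightarrow> 'a \<Rightarrow> real" and F :: "real \<Rightarrow> real" and z p :: real
  assumes rv[measurable]: "\<And>i. X i \<in> borel_measurable M"
  and indep: "indep_vars (\<lambda>_. borel) X UNIV"
  and cdf: "\<And>i x. F x = measure M {\<omega> \<in> space M. X i \<omega> \<le> x}"
  and nonneg: "\<And>i. AE \<omega> in M. X i \<omega> \<ge> 0"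
  and z_pos: "z > 0" and p_def: "p = F z" and p_pos: "p > 0"
begin

abbreviation "\<mu> \<equiv> distr M borel (X 0)"

lemma ind_meas[measurable]: "f \<in> borel_measurable N \<Longrightarrow> (\<lambda>x. ind z (f x)) \<in> borel_measurable N"
  unfolding ind_def by measurable

lemma ind_nonneg: "ind z x \<ge> 0" by (simp add: ind_def)

lemma distr_eq: "distr M borel (X i) = \<mu>"
proof (rule cdf_unique)
  show "real_distribution (distr M borel (X i))" "real_distribution \<mu>"
    by (auto intro!: real_distribution_distr)
  show "cdf (distr M borel (X i)) = cdf \<mu>"
    by (rule ext) (simp add: cdf_def measure_distr vimage_def Int_def conj_commute flip: cdf)
qed

lemma mu_prob: "prob_space \<mu>"
  by (simp add: prob_space_distr)

lemma mu_atMost: "measure \<mu> {..(x::real)} = F x"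
  using cdf[where i=0 and x=x] by (simp add: measure_distr vimage_def Int_def conj_commute)

lemma mu_Ioc: "x \<le> y \<Longrightarrow> measure \<mu> {x<..y} = F y - F x"
proof -
  assume "x \<le> y"
  interpret m: prob_space \<mu> by (rule mu_prob)
  have "{x<..y} = {..y} - {..x}" by auto
  then have "measure \<mu> {x<..y} = measure \<mu> {..y} - measure \<mu> {..x}"
    using \<open>x \<le> y\<close> by (simp add: m.finite_measure_Diff)
  then show ?thesis by (simp add: mu_atMost)
qed

lemma indep2: "i \<noteq> j \<Longrightarrow> indep_var borel (X i) borel (X j)"
proof -
  assume ij: "i \<noteq> j"
  have "indep_var (PiM {i} (\<lambda>_. borel)) (\<lambda>\<omega>. restrict (\<lambda>k. X k \<omega>) {i})
     (PiM {j} (\<lambda>_. borel)) (\<lambda>\<omega>. restrict (\<lambda>k. X k \<omega>) {j})"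
    using ij by (intro indep_var_restrict[OF indep]) auto
  then have "indep_var borel ((\<lambda>x. x i) \<circ> (\<lambda>\<omega>. restrict (\<lambda>k. X k \<omega>) {i}))
       borel ((\<lambda>x. x j) \<circ> (\<lambda>\<omega>. restrict (\<lambda>k. X k \<omega>) {j}))"
    by (rule indep_var_compose) auto
  then show ?thesis by (simp add: comp_def)
qed

lemma pair_fubini:
  fixes g :: "real \<Rightarrow> real \<Rightarrow> real"
  assumes ij: "i \<noteq> j" and g[measurable]: "(\<lambda>(x,y). g x y) \<in> borel_measurable (borel \<Otimes>\<^sub>M borel)"
    and B: "\<And>x y. \<bar>g x y\<bar> \<le> B"
  shows "expectation (\<lambda>\<omega>. g (X i \<omega>) (X j \<omega>)) = (\<integral>x. \<integral>y. g x y \<partial>\<mu> \<partial>\<mu>)"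
proof -
  interpret m: prob_space \<mu> by (rule mu_prob)
  interpret pp: pair_prob_space \<mu> \<mu> ..
  have d: "distr M (borel \<Otimes>\<^sub>M borel) (\<lambda>\<omega>. (X i \<omega>, X j \<omega>)) = \<mu> \<Otimes>\<^sub>M \<mu>"
    using indep2[OF ij] unfolding indep_var_distribution_eq by (simp add: distr_eq[of i] distr_eq[of j])
  have "integral\<^sup>L (distr M (borel \<Otimes>\<^sub>M borel) (\<lambda>\<omega>. (X i \<omega>, X j \<omega>))) (\<lambda>(x,y). g x y) =
      expectation (\<lambda>\<omega>. (\<lambda>(x,y). g x y) (X i \<omega>, X j \<omega>))"
    by (rule integral_distr[where g="\<lambda>\<omega>. (X i \<omega>, X j \<omega>)" and N="borel \<Otimes>\<^sub>M borel" and M=M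
       and f="\<lambda>(x,y). g x y"]; measurable)
  then have "expectation (\<lambda>\<omega>. g (X i \<omega>) (X j \<omega>)) =
      integral\<^sup>L (distr M (borel \<Otimes>\<^sub>M borel) (\<lambda>\<omega>. (X i \<omega>, X j \<omega>))) (\<lambda>(x,y). g x y)"
    by simp
  also have "\<dots> = integral\<^sup>L (\<mu> \<Otimes>\<^sub>M \<mu>) (\<lambda>(x,y). g x y)" by (simp add: d)
  also have "\<dots> = (\<integral>x. \<integral>y. g x y \<partial>\<mu> \<partial>\<mu>)"
  proof -
    have "integrable (\<mu> \<Otimes>\<^sub>M \<mu>) (\<lambda>(x,y). g x y)"
      by (rule pp.P.integrable_const_bound[where B=B]) (auto simp: B split: prod.splits)
    from pp.integral_fst'[OF this] show ?thesis by simp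
  qed
  finally show ?thesis .
qed

lemma pair_factor:
  fixes g :: "real \<Rightarrow> real \<Rightarrow> real"
  assumes ijn: "i < n" "j < n" "i \<noteq> j"
    and g[measurable]: "(\<lambda>(x,y). g x y) \<in> borel_measurable (borel \<Otimes>\<^sub>M borel)"
    and B: "\<And>x y. \<bar>g x y\<bar> \<le> B"
    and gz: "\<And>x y. \<not> (x \<le> z \<and> y \<le> z) \<Longrightarrow> g x y = 0"
  shows "integrable M (\<lambda>\<omega>. g (X i \<omega>) (X j \<omega>) / (\<Sum>k<n. ind z (X k \<omega>)))"
    and "expectation (\<lambda>\<omega>. g (X i \<omega>) (X j \<omega>) / (\<Sum>k<n. ind z (X k \<omega>))) =
         expectation (\<lambda>\<omega>. g (X i \<omega>) (X j \<omega>)) *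
         expectation (\<lambda>\<omega>. 1 / (2 + (\<Sum>k\<in>{..<n} - {i,j}. ind z (X k \<omega>))))"
proof -
  define K where "K = {..<n} - {i,j}"
  have fK: "finite K" by (simp add: K_def)
  have pw: "g (X i \<omega>) (X j \<omega>) / (\<Sum>k<n. ind z (X k \<omega>)) =
      g (X i \<omega>) (X j \<omega>) * (1 / (2 + (\<Sum>k\<in>K. ind z (X k \<omega>))))" for \<omega>
  proof (cases "X i \<omega> \<le> z \<and> X j \<omega> \<le> z")
    case True
    have e: "{..<n} = insert i (insert j K)" using ijn by (auto simp: K_def)
    have "(\<Sum>k<n. ind z (X k \<omega>)) = ind z (X i \<omega>) + (ind z (X j \<omega>) + (\<Sum>k\<in>K. ind z (X k \<omega>)))"
    proof -
      have "i \<notin> insert j K" "j \<notin> K" using ijn by (auto simp: K_def)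
      then show ?thesis unfolding e using fK by simp
    qed
    also have "\<dots> = 2 + (\<Sum>k\<in>K. ind z (X k \<omega>))" using True by (simp add: ind_def)
    finally show ?thesis by simp
  next
    case False then show ?thesis by (simp add: gz)
  qed
  have iv: "indep_var (PiM {i,j} (\<lambda>_. borel)) (\<lambda>\<omega>. restrict (\<lambda>k. X k \<omega>) {i,j})
     (PiM K (\<lambda>_. borel)) (\<lambda>\<omega>. restrict (\<lambda>k. X k \<omega>) K)"
    by (intro indep_var_restrict[OF indep]) (auto simp: K_def)
  have m1: "(\<lambda>x. g (x i) (x j)) \<in> borel_measurable (PiM {i,j} (\<lambda>_. borel))"
  proof -
    have "(\<lambda>x. (x i, x j)) \<in> measurable (PiM {i,j} (\<lambda>_. borel)) (borel \<Otimes>\<^sub>M borel)"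
      by (intro measurable_Pair measurable_component_singleton) auto
    from measurable_compose[OF this g]
    have "(\<lambda>x. (\<lambda>(a,b). g a b) (x i, x j)) \<in> borel_measurable (PiM {i,j} (\<lambda>_. borel))" .
    then show ?thesis by simp
  qed
  have m2: "(\<lambda>x. 1 / (2 + (\<Sum>k\<in>K. ind z (x k)))) \<in> borel_measurable (PiM K (\<lambda>_. borel))"
    by measurable
  have iv2: "indep_var borel (\<lambda>\<omega>. g (X i \<omega>) (X j \<omega>)) borel (\<lambda>\<omega>. 1 / (2 + (\<Sum>k\<in>K. ind z (X k \<omega>))))"
    using indep_var_compose[OF iv m1 m2] by (simp add: comp_def)
  have hb: "norm (1 / (2 + (\<Sum>k\<in>K. ind z (X k \<omega>)))) \<le> 1" for \<omega>
  proof -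
    have "(\<Sum>k\<in>K. ind z (X k \<omega>)) \<ge> 0" by (intro sum_nonneg ind_nonneg)
    then show ?thesis by simp
  qed
  have int1: "integrable M (\<lambda>\<omega>. g (X i \<omega>) (X j \<omega>))"
  proof (rule integrable_const_bound[where B=B])
    show "AE \<omega> in M. norm (g (X i \<omega>) (X j \<omega>)) \<le> B" using B by simp
    have "(\<lambda>\<omega>. (\<lambda>(a,b). g a b) (X i \<omega>, X j \<omega>)) \<in> borel_measurable M" by measurable
    then show "(\<lambda>\<omega>. g (X i \<omega>) (X j \<omega>)) \<in> borel_measurable M" by simp
  qed
  have int2: "integrable M (\<lambda>\<omega>. 1 / (2 + (\<Sum>k\<in>K. ind z (X k \<omega>))))"
    by (rule integrable_const_bound[where B=1, OF AE_I2[OF hb]]) measurable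
  show "integrable M (\<lambda>\<omega>. g (X i \<omega>) (X j \<omega>) / (\<Sum>k<n. ind z (X k \<omega>)))"
    unfolding pw by (rule indep_var_integrable[OF iv2 int1 int2])
  have "expectation (\<lambda>\<omega>. g (X i \<omega>) (X j \<omega>) / (\<Sum>k<n. ind z (X k \<omega>))) =
         expectation (\<lambda>\<omega>. g (X i \<omega>) (X j \<omega>)) *
         expectation (\<lambda>\<omega>. 1 / (2 + (\<Sum>k\<in>K. ind z (X k \<omega>))))"
    unfolding pw by (rule indep_var_lebesgue_integral[OF iv2 int1 int2])
  then show "expectation (\<lambda>\<omega>. g (X i \<omega>) (X j \<omega>) / (\<Sum>k<n. ind z (X k \<omega>))) =
         expectation (\<lambda>\<omega>. g (X i \<omega>) (X j \<omega>)) *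
         expectation (\<lambda>\<omega>. 1 / (2 + (\<Sum>k\<in>{..<n} - {i,j}. ind z (X k \<omega>))))"
    unfolding K_def .
qed


abbreviation "D \<equiv> (LINT x : {0..z} | \<mu>. (z - x) * (F z - F x))"

lemma g1_meas[measurable]: "(\<lambda>(x,y). g1 z x y) \<in> borel_measurable (borel \<Otimes>\<^sub>M borel)"
  unfolding g1_def by measurable

lemma g2_meas[measurable]: "(\<lambda>(x,y). g2 z x y) \<in> borel_measurable (borel \<Otimes>\<^sub>M borel)"
  unfolding g2_def ind_def by measurable

lemma g1_bound: "\<bar>g1 z x y\<bar> \<le> z"
  using z_pos by (auto simp: g1_def)

lemma g2_bound: "\<bar>g2 z x y\<bar> \<le> 1"
  by (auto simp: g2_def ind_def)

lemma g1_zero: "\<not> (x \<le> z \<and> y \<le> z) \<Longrightarrow> g1 z x y = 0"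
  by (auto simp: g1_def)

lemma g2_zero: "\<not> (x \<le> z \<and> y \<le> z) \<Longrightarrow> g2 z x y = 0"
  by (auto simp: g2_def ind_def)

lemma E_g1: "i \<noteq> j \<Longrightarrow> expectation (\<lambda>\<omega>. g1 z (X i \<omega>) (X j \<omega>)) = D"
proof -
  assume ij: "i \<noteq> j"
  interpret m: prob_space \<mu> by (rule mu_prob)
  have inner: "(\<integral>y. g1 z x y \<partial>\<mu>) = (if 0 \<le> x then z - x else 0) * measure \<mu> {x<..z}" for x
  proof -
    have "(\<lambda>y. g1 z x y) = (\<lambda>y. (if 0 \<le> x then z - x else 0) * indicator {x<..z} y)"
      by (rule ext) (auto simp: g1_def indicator_def)
    then show ?thesis by simp
  qed
  have outer: "(if 0 \<le> x then z - x else 0) * measure \<mu> {x<..z} =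
      indicator {0..z} x *\<^sub>R ((z - x) * (F z - F x))" for x
  proof (cases "0 \<le> x \<and> x \<le> z")
    case True then show ?thesis by (simp add: mu_Ioc)
  next
    case False then show ?thesis by auto
  qed
  show ?thesis
    unfolding pair_fubini[OF ij g1_meas g1_bound] inner outer set_lebesgue_integral_def ..
qed

lemma E_g2: "i \<noteq> j \<Longrightarrow> expectation (\<lambda>\<omega>. g2 z (X i \<omega>) (X j \<omega>)) = p * p"
proof -
  assume ij: "i \<noteq> j"
  interpret m: prob_space \<mu> by (rule mu_prob)
  have inner: "(\<integral>y. g2 z x y \<partial>\<mu>) = ind z x * p" for x
  proof -
    have "(\<lambda>y. g2 z x y) = (\<lambda>y. ind z x * indicator {..z} y)"
      by (rule ext) (auto simp: g2_def ind_def indicator_def)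
    then show ?thesis by (simp add: mu_atMost p_def)
  qed
  have "(\<integral>x. ind z x * p \<partial>\<mu>) = p * p"
  proof -
    have "(\<lambda>x. ind z x * p) = (\<lambda>x. p * indicator {..z} x)"
      by (rule ext) (auto simp: ind_def indicator_def)
    then show ?thesis by (simp add: mu_atMost p_def)
  qed
  then show ?thesis
    unfolding pair_fubini[OF ij g2_meas g2_bound] inner .
qed

lemma pair_rel:
  assumes "i < n" "j < n" "i \<noteq> j"
  shows "integrable M (\<lambda>\<omega>. g1 z (X i \<omega>) (X j \<omega>) / (\<Sum>k<n. ind z (X k \<omega>)))"
    and "integrable M (\<lambda>\<omega>. g2 z (X i \<omega>) (X j \<omega>) / (\<Sum>k<n. ind z (X k \<omega>)))"
    and "expectation (\<lambda>\<omega>. g1 z (X i \<omega>) (X j \<omega>) / (\<Sum>k<n. ind z (X k \<omega>))) =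
         D / (p * p) * expectation (\<lambda>\<omega>. g2 z (X i \<omega>) (X j \<omega>) / (\<Sum>k<n. ind z (X k \<omega>)))"
proof -
  note f1 = pair_factor[OF assms g1_meas g1_bound g1_zero]
  note f2 = pair_factor[OF assms g2_meas g2_bound g2_zero]
  show "integrable M (\<lambda>\<omega>. g1 z (X i \<omega>) (X j \<omega>) / (\<Sum>k<n. ind z (X k \<omega>)))" by (rule f1(1))
  show "integrable M (\<lambda>\<omega>. g2 z (X i \<omega>) (X j \<omega>) / (\<Sum>k<n. ind z (X k \<omega>)))" by (rule f2(1))
  show "expectation (\<lambda>\<omega>. g1 z (X i \<omega>) (X j \<omega>) / (\<Sum>k<n. ind z (X k \<omega>))) =
         D / (p * p) * expectation (\<lambda>\<omega>. g2 z (X i \<omega>) (X j \<omega>) / (\<Sum>k<n. ind z (X k \<omega>)))"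
    using f1(2) f2(2) E_g1[OF assms(3)] E_g2[OF assms(3)] p_pos by (simp add: field_simps)
qed


lemma ind_rv[measurable]: "(\<lambda>\<omega>. ind z (X k \<omega>)) \<in> borel_measurable M"
  unfolding ind_def by measurable

lemma E_ind: "expectation (\<lambda>\<omega>. ind z (X k \<omega>)) = p"
proof -
  have "expectation (\<lambda>\<omega>. ind z (X k \<omega>)) = expectation (\<lambda>\<omega>. indicator {\<omega> \<in> space M. X k \<omega> \<le> z} \<omega>)"
    by (rule Bochner_Integration.integral_cong[OF refl]) (auto simp: ind_def indicator_def)
  also have "\<dots> = prob {\<omega> \<in> space M. X k \<omega> \<le> z}"
    by (simp add: Int_absorb2)
  finally show ?thesis using cdf[where i=k and x=z] p_def by simp
qed

lemma ind_int: "integrable M (\<lambda>\<omega>. ind z (X k \<omega>))"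
  by (rule integrable_const_bound[where B=1]) (auto simp: ind_def)

lemma E_N: "expectation (\<lambda>\<omega>. \<Sum>k<n. ind z (X k \<omega>)) = real n * p"
  by (simp add: integral_sum ind_int E_ind)

lemma E_zero:
  assumes "n > 0"
  shows "expectation (\<lambda>\<omega>. if (\<Sum>k<n. ind z (X k \<omega>)) = 0 then 1 else 0) = (1 - p) ^ n"
proof -
  define S where "S = (\<Inter>k\<in>{..<n}. X k -` {z<..} \<inter> space M)"
  have pw: "(if (\<Sum>k<n. ind z (X k \<omega>)) = 0 then 1 else 0) = indicator S \<omega>" if "\<omega> \<in> space M" for \<omega>
  proof -
    have "(\<Sum>k<n. ind z (X k \<omega>)) = 0 \<longleftrightarrow> (\<forall>k\<in>{..<n}. ind z (X k \<omega>) = 0)"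
      by (rule sum_nonneg_eq_0_iff) (auto simp: ind_nonneg)
    also have "\<dots> \<longleftrightarrow> \<omega> \<in> S" using that assms by (auto simp: S_def ind_def not_le)
    finally show ?thesis by (simp add: indicator_def)
  qed
  have SM: "S \<subseteq> space M" using assms by (auto simp: S_def)
  have "expectation (\<lambda>\<omega>. if (\<Sum>k<n. ind z (X k \<omega>)) = 0 then 1 else 0) = expectation (indicator S)"
    by (rule Bochner_Integration.integral_cong[OF refl]) (auto simp: pw)
  also have "\<dots> = prob S" using SM by (simp add: Int_absorb2)
  also have "\<dots> = (\<Prod>k\<in>{..<n}. prob (X k -` {z<..} \<inter> space M))"
    unfolding S_def using assms by (intro indep_varsD[OF indep]) auto
  also have "\<dots> = (\<Prod>k\<in>{..<n}. 1 - p)"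
  proof (intro prod.cong refl)
    fix k
    have "X k -` {z<..} \<inter> space M = space M - {\<omega> \<in> space M. X k \<omega> \<le> z}" by auto
    then have "prob (X k -` {z<..} \<inter> space M) = 1 - prob {\<omega> \<in> space M. X k \<omega> \<le> z}"
      by (simp add: prob_compl)
    then show "prob (X k -` {z<..} \<inter> space M) = 1 - p"
      using cdf[where i=k and x=z] p_def by simp
  qed
  finally show ?thesis by simp
qed

lemma S_hat_pw:
  assumes n: "n \<ge> 2" and nn: "\<And>k. k < n \<Longrightarrow> X k \<omega> \<ge> 0"
  shows "S_hat z X n \<omega> = 2 / (z * (real n - 1)) *
     (\<Sum>i<n. \<Sum>j\<in>{..<n}-{i}. g1 z (X i \<omega>) (X j \<omega>) / (\<Sum>k<n. ind z (X k \<omega>)))"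
proof -
  define N where "N = (\<Sum>k<n. ind z (X k \<omega>))"
  define h where "h i j = (z - X i \<omega>) * (if X i \<omega> < X j \<omega> \<and> X j \<omega> \<le> z then 1 else 0)" for i j
  define G where "G = (\<Sum>i<n. \<Sum>j\<in>{..<n}-{i}. g1 z (X i \<omega>) (X j \<omega>))"
  have S1: "(\<Sum>i<n. \<Sum>j<i. psi1 z (X i \<omega>) (X j \<omega>)) = G / 2"
  proof -
    have "(\<Sum>i<n. \<Sum>j<i. psi1 z (X i \<omega>) (X j \<omega>)) = (\<Sum>i<n. \<Sum>j<i. (h i j + h j i) / 2)"
      by (simp add: psi1_def h_def)
    also have "\<dots> = (\<Sum>i<n. \<Sum>j<i. h i j + h j i) / 2"
      by (simp add: sum_divide_distrib)
    also have "\<dots> = (\<Sum>i<n. \<Sum>j\<in>{..<n}-{i}. h i j) / 2" by (simp add: pairsum)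
    also have "(\<Sum>i<n. \<Sum>j\<in>{..<n}-{i}. h i j) = G"
      unfolding G_def using nn by (intro sum.cong refl) (auto simp: h_def g1_def)
    finally show ?thesis .
  qed
  have S2: "(\<Sum>i<n. \<Sum>j<i. psi2 z (X i \<omega>) (X j \<omega>)) = (real n - 1) * N / 2"
  proof -
    have "(\<Sum>i<n. \<Sum>j<i. psi2 z (X i \<omega>) (X j \<omega>)) =
        (\<Sum>i<n. \<Sum>j<i. (\<lambda>a b. ind z (X a \<omega>)) i j + (\<lambda>a b. ind z (X a \<omega>)) j i) / 2"
      by (simp add: psi2_def ind_def sum_divide_distrib)
    also have "\<dots> = (\<Sum>i<n. \<Sum>j\<in>{..<n}-{i}. ind z (X i \<omega>)) / 2"
      by (subst pairsum) simp
    also have "(\<Sum>i<n. \<Sum>j\<in>{..<n}-{i}. ind z (X i \<omega>)) = (\<Sum>i<n. (real n - 1) * ind z (X i \<omega>))"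
      using n by (intro sum.cong refl) (auto simp: card_Diff_singleton of_nat_diff)
    also have "\<dots> = (real n - 1) * N" by (simp add: N_def sum_distrib_left)
    finally show ?thesis .
  qed
  have C: "real (n choose 2) \<noteq> 0" using n by simp
  have "S_hat z X n \<omega> = (2 / z) * ((G / 2) / ((real n - 1) * N / 2))"
    unfolding S_hat_def U1_def U2_def S1 S2 using C by simp
  also have "\<dots> = 2 / (z * (real n - 1)) * (G / N)" by (simp add: field_simps)
  also have "G / N = (\<Sum>i<n. \<Sum>j\<in>{..<n}-{i}. g1 z (X i \<omega>) (X j \<omega>) / N)"
    unfolding G_def by (simp add: sum_divide_distrib)
  finally show ?thesis by (simp add: N_def)
qed

lemma V_pw:
  "(\<Sum>i<n. \<Sum>j\<in>{..<n}-{i}. g2 z (X i \<omega>) (X j \<omega>) / (\<Sum>k<n. ind z (X k \<omega>))) =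
    (\<Sum>k<n. ind z (X k \<omega>)) + (if (\<Sum>k<n. ind z (X k \<omega>)) = 0 then 1 else 0) - 1"
proof -
  define N where "N = (\<Sum>k<n. ind z (X k \<omega>))"
  have sq: "ind z x * ind z x = ind z x" for x by (simp add: ind_def)
  have "(\<Sum>i<n. \<Sum>j\<in>{..<n}-{i}. g2 z (X i \<omega>) (X j \<omega>)) = (\<Sum>i<n. ind z (X i \<omega>) * (N - ind z (X i \<omega>)))"
  proof (intro sum.cong refl)
    fix i assume "i \<in> {..<n}"
    then have "(\<Sum>j\<in>{..<n}-{i}. ind z (X j \<omega>)) = N - ind z (X i \<omega>)"
      by (simp add: sum_diff1 N_def)
    then show "(\<Sum>j\<in>{..<n}-{i}. g2 z (X i \<omega>) (X j \<omega>)) = ind z (X i \<omega>) * (N - ind z (X i \<omega>))"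
      by (simp add: g2_def sum_distrib_left[symmetric])
  qed
  also have "\<dots> = N * N - N"
    by (simp add: algebra_simps sq sum_subtractf N_def sum_distrib_left sum_distrib_right)
  finally have e: "(\<Sum>i<n. \<Sum>j\<in>{..<n}-{i}. g2 z (X i \<omega>) (X j \<omega>)) = N * N - N" .
  have "(\<Sum>i<n. \<Sum>j\<in>{..<n}-{i}. g2 z (X i \<omega>) (X j \<omega>) / N) = (N * N - N) / N"
    by (simp add: sum_divide_distrib[symmetric] e)
  also have "\<dots> = N + (if N = 0 then 1 else 0) - 1"
    by (cases "N = 0") (simp_all add: field_simps)
  finally show ?thesis by (simp add: N_def)
qed


lemma E_S_hat:
  assumes n: "n \<ge> 2"
  shows "expectation (S_hat z X n) = 2 / (z * (real n - 1)) * (D / (p * p)) * (real n * p - 1 + (1 - p) ^ n)"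
proof -
  define N where "N \<omega> = (\<Sum>k<n. ind z (X k \<omega>))" for \<omega>
  define c where "c = 2 / (z * (real n - 1))"
  have Nm[measurable]: "N \<in> borel_measurable M" unfolding N_def by measurable
  have int1: "integrable M (\<lambda>\<omega>. g1 z (X i \<omega>) (X j \<omega>) / N \<omega>)"
    if "i \<in> {..<n}" "j \<in> {..<n} - {i}" for i j
    using pair_rel(1)[of i n j] that unfolding N_def by auto
  have int2: "integrable M (\<lambda>\<omega>. g2 z (X i \<omega>) (X j \<omega>) / N \<omega>)"
    if "i \<in> {..<n}" "j \<in> {..<n} - {i}" for i j
    using pair_rel(2)[of i n j] that unfolding N_def by auto
  have rel: "expectation (\<lambda>\<omega>. g1 z (X i \<omega>) (X j \<omega>) / N \<omega>) =
      D / (p * p) * expectation (\<lambda>\<omega>. g2 z (X i \<omega>) (X j \<omega>) / N \<omega>)"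
    if "i \<in> {..<n}" "j \<in> {..<n} - {i}" for i j
    using pair_rel(3)[of i n j] that unfolding N_def by auto
  have AEnn: "AE \<omega> in M. \<forall>k. X k \<omega> \<ge> 0"
    by (simp add: AE_all_countable nonneg)
  have Sm: "S_hat z X n \<in> borel_measurable M"
    unfolding S_hat_def U1_def U2_def psi1_def psi2_def by measurable
  have Tm: "(\<lambda>\<omega>. c * (\<Sum>i<n. \<Sum>j\<in>{..<n}-{i}. g1 z (X i \<omega>) (X j \<omega>) / N \<omega>)) \<in> borel_measurable M"
    unfolding g1_def by measurable
  have "expectation (S_hat z X n) = expectation (\<lambda>\<omega>. c * (\<Sum>i<n. \<Sum>j\<in>{..<n}-{i}. g1 z (X i \<omega>) (X j \<omega>) / N \<omega>))"
  proof (rule integral_cong_AE[OF Sm Tm])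
    show "AE \<omega> in M. S_hat z X n \<omega> = c * (\<Sum>i<n. \<Sum>j\<in>{..<n}-{i}. g1 z (X i \<omega>) (X j \<omega>) / N \<omega>)"
      using AEnn by eventually_elim (simp add: S_hat_pw[OF n] c_def N_def)
  qed
  also have "\<dots> = c * expectation (\<lambda>\<omega>. \<Sum>i<n. \<Sum>j\<in>{..<n}-{i}. g1 z (X i \<omega>) (X j \<omega>) / N \<omega>)"
    by simp
  also have "expectation (\<lambda>\<omega>. \<Sum>i<n. \<Sum>j\<in>{..<n}-{i}. g1 z (X i \<omega>) (X j \<omega>) / N \<omega>) =
      (\<Sum>i<n. \<Sum>j\<in>{..<n}-{i}. expectation (\<lambda>\<omega>. g1 z (X i \<omega>) (X j \<omega>) / N \<omega>))"
  proof -
    have "expectation (\<lambda>\<omega>. \<Sum>i<n. \<Sum>j\<in>{..<n}-{i}. g1 z (X i \<omega>) (X j \<omega>) / N \<omega>) =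
      (\<Sum>i<n. expectation (\<lambda>\<omega>. \<Sum>j\<in>{..<n}-{i}. g1 z (X i \<omega>) (X j \<omega>) / N \<omega>))"
      by (rule Bochner_Integration.integral_sum, rule Bochner_Integration.integrable_sum, rule int1)
    also have "\<dots> = (\<Sum>i<n. \<Sum>j\<in>{..<n}-{i}. expectation (\<lambda>\<omega>. g1 z (X i \<omega>) (X j \<omega>) / N \<omega>))"
      by (intro sum.cong refl Bochner_Integration.integral_sum int1)
    finally show ?thesis .
  qed
  also have "\<dots> = (\<Sum>i<n. \<Sum>j\<in>{..<n}-{i}. D / (p * p) * expectation (\<lambda>\<omega>. g2 z (X i \<omega>) (X j \<omega>) / N \<omega>))"
    by (intro sum.cong refl rel) auto
  also have "\<dots> = D / (p * p) * (\<Sum>i<n. \<Sum>j\<in>{..<n}-{i}. expectation (\<lambda>\<omega>. g2 z (X i \<omega>) (X j \<omega>) / N \<omega>))"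
    by (simp add: sum_distrib_left)
  also have "(\<Sum>i<n. \<Sum>j\<in>{..<n}-{i}. expectation (\<lambda>\<omega>. g2 z (X i \<omega>) (X j \<omega>) / N \<omega>)) =
      expectation (\<lambda>\<omega>. \<Sum>i<n. \<Sum>j\<in>{..<n}-{i}. g2 z (X i \<omega>) (X j \<omega>) / N \<omega>)"
  proof -
    have "expectation (\<lambda>\<omega>. \<Sum>i<n. \<Sum>j\<in>{..<n}-{i}. g2 z (X i \<omega>) (X j \<omega>) / N \<omega>) =
      (\<Sum>i<n. expectation (\<lambda>\<omega>. \<Sum>j\<in>{..<n}-{i}. g2 z (X i \<omega>) (X j \<omega>) / N \<omega>))"
      by (rule Bochner_Integration.integral_sum, rule Bochner_Integration.integrable_sum, rule int2)
    also have "\<dots> = (\<Sum>i<n. \<Sum>j\<in>{..<n}-{i}. expectation (\<lambda>\<omega>. g2 z (X i \<omega>) (X j \<omega>) / N \<omega>))"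
      by (intro sum.cong refl Bochner_Integration.integral_sum int2)
    finally show ?thesis by simp
  qed
  also have "\<dots> = expectation (\<lambda>\<omega>. (N \<omega> + (if N \<omega> = 0 then 1 else 0)) - 1)"
    unfolding N_def by (simp add: V_pw)
  also have "\<dots> = expectation (\<lambda>\<omega>. N \<omega> + (if N \<omega> = 0 then 1 else 0)) - 1"
  proof -
    have iN: "integrable M N"
      unfolding N_def by (intro Bochner_Integration.integrable_sum ind_int)
    have i0: "integrable M (\<lambda>\<omega>. if N \<omega> = 0 then 1 else 0 :: real)"
      by (rule integrable_const_bound[where B=1]) auto
    show ?thesis using iN i0 by (subst Bochner_Integration.integral_diff) (auto simp: prob_space)
  qed
  also have "expectation (\<lambda>\<omega>. N \<omega> + (if N \<omega> = 0 then 1 else 0)) = real n * p + (1 - p) ^ n"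
  proof -
    have iN: "integrable M N"
      unfolding N_def by (intro Bochner_Integration.integrable_sum ind_int)
    have i0: "integrable M (\<lambda>\<omega>. if N \<omega> = 0 then 1 else 0 :: real)"
      by (rule integrable_const_bound[where B=1]) auto
    have "expectation (\<lambda>\<omega>. N \<omega> + (if N \<omega> = 0 then 1 else 0)) = expectation N + expectation (\<lambda>\<omega>. if N \<omega> = 0 then 1 else 0 :: real)"
      using iN i0 by (rule Bochner_Integration.integral_add)
    also have "\<dots> = real n * p + (1 - p) ^ n"
      using E_N[of n] E_zero[of n] n unfolding N_def by simp
    finally show ?thesis .
  qed
  finally have e: "expectation (S_hat z X n) = c * (D / (p * p) * (real n * p + (1 - p) ^ n - 1))" .
  have r: "real n * p + (1 - p) ^ n - 1 = real n * p - 1 + (1 - p) ^ n" by simp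
  show ?thesis by (simp only: e c_def r mult.assoc)
qed

end

lemma sen_limit:
  fixes p z DD :: real
  assumes p: "0 < p" "p \<le> 1" and z: "z > 0"
    and e: "\<And>n. n \<ge> 2 \<Longrightarrow> a n = 2 / (z * (real n - 1)) * (DD / (p * p)) * (real n * p - 1 + (1 - p) ^ n)"
  shows "a \<longlonglongrightarrow> 2 / (z * p) * DD"
proof -
  have L1: "(\<lambda>n. 1 / (real n - 1)) \<longlonglongrightarrow> 0" by real_asymp
  have L0: "(\<lambda>n. (1 - p) ^ n) \<longlonglongrightarrow> 0" by (rule LIMSEQ_power_zero) (use p in auto)
  have L2: "(\<lambda>n. p - 1 + (1 - p) ^ n) \<longlonglongrightarrow> p - 1 + 0"
    by (intro tendsto_add tendsto_const L0)
  have L3: "(\<lambda>n. 2 * DD / (z * p * p) * (p + (p - 1 + (1 - p) ^ n) * (1 / (real n - 1))))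
      \<longlonglongrightarrow> 2 * DD / (z * p * p) * (p + (p - 1 + 0) * 0)"
    by (intro tendsto_mult tendsto_add tendsto_const L1 L2)
  have lim: "2 * DD / (z * p * p) * (p + (p - 1 + 0) * 0) = 2 / (z * p) * DD"
    using p z by (simp add: field_simps)
  have ev: "\<forall>\<^sub>F n in sequentially. 2 * DD / (z * p * p) * (p + (p - 1 + (1 - p) ^ n) * (1 / (real n - 1))) = a n"
    using eventually_ge_at_top[of "2::nat"]
  proof eventually_elim
    case (elim n)
    then have n1: "real n - 1 \<noteq> 0" by simp
    show ?case unfolding e[OF elim] using n1 p z by (simp add: field_simps)
  qed
  show ?thesis using tendsto_cong[OF ev] L3 lim by simp
qed

theorem theorem2:
  fixes M :: "'a measure" and X :: "nat \<Rightarrow> 'a \<Rightarrow> real"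
    and F :: "real \<Rightarrow> real" and z p :: real
  assumes "prob_space M"
    and rv: "\<And>i. X i \<in> borel_measurable M"
    and indep: "prob_space.indep_vars M (\<lambda>_. borel) X UNIV"
    and cdf: "\<And>i x. F x = measure M {\<omega> \<in> space M. X i \<omega> \<le> x}"
    and nonneg: "\<And>i. AE \<omega> in M. X i \<omega> \<ge> 0"
    and z_pos: "z > 0"
    and p_def: "p = F z" and p_pos: "p > 0"
    and Q_cont: "continuous_on {0<..p} (quantile F)"
    and Q_cont0: "\<exists>L. (quantile F \<longlongrightarrow> L) (at_right 0)"
    and Q_int: "set_integrable lborel {0<..p} (quantile F)"
  shows "(\<lambda>n. prob_space.expectation M (S_hat z X n))
           \<longlonglongrightarrow> sen_index z F (distr M borel (X 0))"
proof -
  have "sen M X F z p"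
    unfolding sen_def sen_axioms_def using assms by auto
  then interpret s: sen M X F z p .
  have p1: "p \<le> 1" using cdf[of z 0] p_def by (simp add: s.prob_le_1)
  have "(\<lambda>n. prob_space.expectation M (S_hat z X n)) \<longlonglongrightarrow>
      2 / (z * p) * (LINT x : {0..z} | distr M borel (X 0). (z - x) * (F z - F x))"
    by (rule sen_limit[OF p_pos p1 z_pos s.E_S_hat])
  then show ?thesis by (simp add: sen_index_def p_def)
qed

end
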